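(* Let $n,m$ be integers with $n\geq m\geq 0$. For every integer $k\geq 4$, $$ gr_{k}(K_{3} : S(n,m)) \geq \begin{cases} 5\cdot\frac{n}{2} + m(k-3)+1 & \text{ if $n$ is even,}\\ 5\cdot\frac{n-1}{2} + m(k-3)+ 2 & \text{ if $n$ is odd.} \end{cases} $$
   Context: For integers $n\geq m\geq 0$, the double star $S(n,m)$ is the graph obtained from the disjoint union of the stars $K_{1,n}$ and $K_{1,m}$ by adding an edge between their centers. A $k$-coloring of a graph is an assignment of one of $k$ colors to each edge. A subgraph is rainbow if all its edges have distinct colors and monochromatic if all its edges have the same color. For graphs $G,H$ and a positive integer $k$, the Gallai–Ramsey number $gr_k(G:H)$ is the minimum integer $N$ such that every $k$-coloring of the edges of the complete graph $K_N$ contains either a rainbow copy of $G$ or a monochromatic copy of $H$. *)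

theory Defs
  imports Main "HOL-Library.Extended_Nat"
begin

type_synonym 'a graph = "'a set \<times> 'a set set"

definition is_graph :: "'a graph \<Rightarrow> bool" where
  "is_graph G \<longleftrightarrow> finite (fst G) \<and> (\<forall>e\<in>snd G. e \<subseteq> fst G \<and> card e = 2)"

definition KN_edges :: "nat \<Rightarrow> nat set set" where
  "KN_edges N = {e. e \<subseteq> {..<N} \<and> card e = 2}"

definition k_coloring :: "nat \<Rightarrow> nat \<Rightarrow> (nat set \<Rightarrow> nat) \<Rightarrow> bool" where
  "k_coloring k N c \<longleftrightarrow> (\<forall>e\<in>KN_edges N. c e < k)"

definition rainbow_copy :: "nat \<Rightarrow> (nat set \<Rightarrow> nat) \<Rightarrow> 'a graph \<Rightarrow> bool" where
  "rainbow_copy N c H \<longleftrightarrow>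
     (\<exists>f. inj_on f (fst H) \<and> f ` fst H \<subseteq> {..<N} \<and> inj_on (\<lambda>e. c (f ` e)) (snd H))"

definition mono_copy :: "nat \<Rightarrow> (nat set \<Rightarrow> nat) \<Rightarrow> 'a graph \<Rightarrow> bool" where
  "mono_copy N c H \<longleftrightarrow>
     (\<exists>f col. inj_on f (fst H) \<and> f ` fst H \<subseteq> {..<N} \<and> (\<forall>e\<in>snd H. c (f ` e) = col))"

text \<open>Gallai-Ramsey number, as an extended natural (infinity if no such N exists).\<close>

definition gr :: "nat \<Rightarrow> 'a graph \<Rightarrow> 'b graph \<Rightarrow> enat" where
  "gr k G H = Inf (enat ` {N. \<forall>c. k_coloring k N c \<longrightarrow> rainbow_copy N c G \<or> mono_copy N c H})"

definition K3 :: "nat graph" where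
  "K3 = ({0,1,2}, {{0,1},{1,2},{0,2}})"

definition double_star :: "nat \<Rightarrow> nat \<Rightarrow> nat graph" where
  "double_star n m = ({0..<n+m+2},
     {{0,1}} \<union> (\<lambda>i. {0,i}) ` {2..<n+2} \<union> (\<lambda>j. {1,j}) ` {n+2..<n+m+2})"

end

theory Submission
  imports Defs
begin

definition lev :: "nat \<Rightarrow> nat \<Rightarrow> nat \<Rightarrow> nat" where
  "lev B m v = (if v < B then 0 else Suc ((v - B) div m))"

definition bcol :: "nat \<Rightarrow> nat \<Rightarrow> nat" where
  "bcol x y = (if x mod 5 = y mod 5 then 2
     else if (x + 1) mod 5 = y mod 5 \<or> (y + 1) mod 5 = x mod 5 then 0 else 1)"

definition col :: "nat \<Rightarrow> nat \<Rightarrow> nat \<Rightarrow> nat \<Rightarrow> nat" where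
  "col B m x y = (if lev B m x \<noteq> lev B m y then 2 + max (lev B m x) (lev B m y)
     else if lev B m x = 0 then bcol x y else 2)"

definition cc :: "nat \<Rightarrow> nat \<Rightarrow> nat set \<Rightarrow> nat" where
  "cc B m e = col B m (Min e) (Max e)"

lemma bcol_le: "bcol x y \<le> 2"
  by (simp add: bcol_def)

lemma col_sym: "col B m x y = col B m y x"
  unfolding col_def bcol_def by (auto simp: max.commute)

lemma cc_pair: "cc B m {a, b} = col B m a b"
proof (cases "a \<le> b")
  case True
  then show ?thesis by (simp add: cc_def min_def max_def)
next
  case False
  then show ?thesis by (simp add: cc_def min_def max_def col_sym)
qed

lemma bcol_tri: "bcol a b = bcol b c \<or> bcol b c = bcol a c \<or> bcol a b = bcol a c"
proof -
  have "a mod 5 < 5" "b mod 5 < 5" "c mod 5 < 5" by auto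
  moreover have "(x + 1) mod 5 = (x mod 5 + 1) mod 5" for x :: nat by (simp add: mod_Suc_eq)
  ultimately show ?thesis unfolding bcol_def
    by (smt (verit) less_Suc_eq numeral_eq_Suc)
qed

lemma col_tri: "col B m a b = col B m b c \<or> col B m b c = col B m a c \<or> col B m a b = col B m a c"
  using bcol_tri[of a b c]
  unfolding col_def Let_def
  by (cases "lev B m a" "lev B m b" rule: linorder_cases; cases "lev B m b" "lev B m c" rule: linorder_cases;
      cases "lev B m a" "lev B m c" rule: linorder_cases) (simp_all add: max_def)

lemma res_card:
  assumes "finite R" "e \<le> 1"
  shows "card {w::nat. w < 5*s+e \<and> w mod 5 \<in> R} \<le> s * card R + e"
proof -
  have sub: "{w::nat. w < 5*s+e \<and> w mod 5 \<in> R} \<subseteq>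
     (\<lambda>p. 5 * fst p + snd p) ` ({..<s} \<times> R) \<union> {5*s..<5*s+e}"
  proof
    fix w assume w: "w \<in> {w::nat. w < 5*s+e \<and> w mod 5 \<in> R}"
    show "w \<in> (\<lambda>p. 5 * fst p + snd p) ` ({..<s} \<times> R) \<union> {5*s..<5*s+e}"
    proof (cases "w < 5 * s")
      case True
      then have "w = 5 * fst (w div 5, w mod 5) + snd (w div 5, w mod 5)" "(w div 5, w mod 5) \<in> {..<s} \<times> R"
        using w by auto
      then show ?thesis by blast
    next
      case False then show ?thesis using w by auto
    qed
  qed
  have "card {w::nat. w < 5*s+e \<and> w mod 5 \<in> R} \<le> card ((\<lambda>p. 5 * fst p + snd p) ` ({..<s} \<times> R) \<union> {5*s..<5*s+e})"
    by (rule card_mono[OF _ sub]) (use assms in auto)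
  also have "\<dots> \<le> card ((\<lambda>p. 5 * fst p + snd p) ` ({..<s} \<times> R)) + card {5*s..<5*s+e}"
    by (rule card_Un_le)
  also have "\<dots> \<le> card ({..<s} \<times> R) + e"
    using card_image_le[of "{..<s} \<times> R" "\<lambda>p. 5 * fst p + snd p"] assms by auto
  also have "\<dots> = s * card R + e" by (simp add: card_cartesian_product)
  finally show ?thesis .
qed

lemma block_card:
  assumes "1 \<le> M"
  shows "card {w. w < B + m*t \<and> lev B m w = M} \<le> m"
proof -
  have sub: "{w. w < B + m*t \<and> lev B m w = M} \<subseteq> (\<lambda>q. B + (M-1)*m + q) ` {..<m}"
  proof
    fix w assume w: "w \<in> {w. w < B + m*t \<and> lev B m w = M}"
    then have wB: "B \<le> w" "Suc ((w - B) div m) = M" using assms by (auto simp: lev_def split: if_splits)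
    then have "m > 0" using w by (cases "m = 0") auto
    have "w - B = (w - B) div m * m + (w - B) mod m" by simp
    moreover have "(w - B) div m = M - 1" using wB by simp
    ultimately have "w - B = (M-1)*m + (w - B) mod m" by simp
    then have "w = B + (M-1)*m + (w - B) mod m" using wB(1) by linarith
    moreover have "(w - B) mod m < m" using \<open>m > 0\<close> by simp
    ultimately show "w \<in> (\<lambda>q. B + (M-1)*m + q) ` {..<m}" by blast
  qed
  have "card {w. w < B + m*t \<and> lev B m w = M} \<le> card ((\<lambda>q. B + (M-1)*m + q) ` {..<m})"
    by (rule card_mono[OF _ sub]) auto
  also have "\<dots> \<le> m" using card_image_le[of "{..<m}" "\<lambda>q. B + (M-1)*m + q"] by simp
  finally show ?thesis .
qed

definition Nb :: "nat \<Rightarrow> nat \<Rightarrow> nat \<Rightarrow> nat \<Rightarrow> nat \<Rightarrow> nat set" where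
  "Nb B m N x c0 = {w. w < N \<and> w \<noteq> x \<and> col B m x w = c0}"

lemma deg_big:
  assumes "col B m x y \<ge> 3"
  shows "card (Nb B m (B + m*t) x (col B m x y)) \<le> m \<or> card (Nb B m (B + m*t) y (col B m x y)) \<le> m"
proof -
  have ne: "lev B m x \<noteq> lev B m y" and cv: "col B m x y = 2 + max (lev B m x) (lev B m y)"
    using assms by (auto simp: col_def bcol_def split: if_splits)
  define M where "M = max (lev B m x) (lev B m y)"
  have M1: "1 \<le> M" using ne M_def by auto
  have key: "card (Nb B m (B + m*t) z (2 + M)) \<le> m" if "lev B m z < M" for z
  proof -
    have "Nb B m (B + m*t) z (2 + M) \<subseteq> {w. w < B + m*t \<and> lev B m w = M}"
    proof
      fix w assume w: "w \<in> Nb B m (B + m*t) z (2 + M)"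
      have "bcol z w \<noteq> 2 + M" using bcol_le[of z w] M1 by linarith
      then show "w \<in> {w. w < B + m*t \<and> lev B m w = M}"
        using w that unfolding Nb_def col_def by (auto split: if_splits)
    qed
    then have "card (Nb B m (B + m*t) z (2 + M)) \<le> card {w. w < B + m*t \<and> lev B m w = M}"
      by (rule card_mono[rotated]) auto
    then show ?thesis using block_card[OF M1, of B m t] by linarith
  qed
  show ?thesis
  proof (cases "lev B m x < lev B m y")
    case True
    then show ?thesis using key[of x] cv M_def by auto
  next
    case False
    then show ?thesis using key[of y] cv M_def ne by auto
  qed
qed

lemma bcol_R:
  assumes "r < 5" "bcol x r = c0" "c0 \<le> 2"
  shows "(c0 = 2 \<longrightarrow> r = x mod 5) \<and> (c0 = 0 \<longrightarrow> r = (x + 1) mod 5 \<or> r = (x + 4) mod 5)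
    \<and> (c0 = 1 \<longrightarrow> r = (x + 2) mod 5 \<or> r = (x + 3) mod 5)"
proof -
  define a where "a = x mod 5"
  have a5: "a < 5" by (simp add: a_def)
  have m1: "(x + j) mod 5 = (a + j) mod 5" for j by (simp add: a_def mod_add_left_eq)
  have bc: "bcol x r = (if a = r then 2 else if (a + 1) mod 5 = r \<or> (r + 1) mod 5 = a then 0 else 1)"
    using assms(1) m1[of 1] by (simp add: bcol_def a_def[symmetric])
  have "a = 0 \<or> a = 1 \<or> a = 2 \<or> a = 3 \<or> a = 4" using a5 by linarith
  moreover have "r = 0 \<or> r = 1 \<or> r = 2 \<or> r = 3 \<or> r = 4" using assms(1) by linarith
  ultimately show ?thesis using assms(2,3) unfolding bc m1 a_def[symmetric]
    by (elim disjE; auto)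
qed

lemma bcol_mod: "bcol x (w mod 5) = bcol x w"
  by (simp add: bcol_def mod_Suc_eq)

lemma card_two: "card {a, b} \<le> 2"
  by (simp add: card_insert_if)

lemma deg_small:
  assumes c0: "c0 \<le> 2" and mn: "m \<le> n" and B: "B = 5*(n div 2) + n mod 2"
  shows "card (Nb B m (B + m*t) x c0) \<le> n"
proof (cases "lev B m x = 0")
  case True
  define R where "R = {r. r < 5 \<and> bcol x r = c0}"
  have sub: "Nb B m (B + m*t) x c0 \<subseteq> {w::nat. w < 5*(n div 2) + n mod 2 \<and> w mod 5 \<in> R}"
  proof
    fix w assume w: "w \<in> Nb B m (B + m*t) x c0"
    have "lev B m w = 0" using w True c0 unfolding Nb_def col_def by (auto split: if_splits)
    then have "w < B" by (auto simp: lev_def split: if_splits)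
    moreover have "bcol x w = c0" using w True \<open>lev B m w = 0\<close> unfolding Nb_def col_def by auto
    ultimately show "w \<in> {w::nat. w < 5*(n div 2) + n mod 2 \<and> w mod 5 \<in> R}"
      using B by (simp add: R_def bcol_mod)
  qed
  have fR: "finite R" by (simp add: R_def)
  have cR: "card R * (n div 2) + n mod 2 \<le> n"
  proof -
    have "card R \<le> 2"
    proof (cases "c0 = 2")
      case True
      have "R \<subseteq> {x mod 5}" using bcol_R c0 True unfolding R_def by blast
      then have "card R \<le> 1" using card_mono[of "{x mod 5}" R] by simp
      then show ?thesis by simp
    next
      case False
      then have "c0 = 0 \<or> c0 = 1" using c0 by linarith
      then show ?thesis
      proof
        assume h: "c0 = 0"
        have s1: "R \<subseteq> {(x + 1) mod 5, (x + 4) mod 5}" using bcol_R c0 h unfolding R_def by blast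
        show ?thesis using card_mono[OF _ s1] card_two[of "(x + 1) mod 5" "(x + 4) mod 5"] by simp
      next
        assume h: "c0 = 1"
        have s1: "R \<subseteq> {(x + 2) mod 5, (x + 3) mod 5}" using bcol_R c0 h unfolding R_def by blast
        show ?thesis using card_mono[OF _ s1] card_two[of "(x + 2) mod 5" "(x + 3) mod 5"] by simp
      qed
    qed
    then have "card R * (n div 2) \<le> 2 * (n div 2)" by simp
    moreover have "2 * (n div 2) + n mod 2 = n" by simp
    ultimately show ?thesis by linarith
  qed
  have "card (Nb B m (B + m*t) x c0) \<le> card {w::nat. w < 5*(n div 2) + n mod 2 \<and> w mod 5 \<in> R}"
    by (rule card_mono[OF _ sub]) auto
  also have "\<dots> \<le> (n div 2) * card R + n mod 2" by (rule res_card[OF fR]) simp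
  finally show ?thesis using cR by (simp add: mult.commute)
next
  case False
  have sub: "Nb B m (B + m*t) x c0 \<subseteq> {w. w < B + m*t \<and> lev B m w = lev B m x}"
    using c0 unfolding Nb_def col_def by (auto split: if_splits)
  have "card (Nb B m (B + m*t) x c0) \<le> card {w. w < B + m*t \<and> lev B m w = lev B m x}"
    by (rule card_mono[OF _ sub]) auto
  also have "\<dots> \<le> m" by (rule block_card) (use False in simp)
  finally show ?thesis using mn by simp
qed

lemma no_rainbow: "\<not> rainbow_copy N (cc B m) K3"
proof
  assume "rainbow_copy N (cc B m) K3"
  then obtain f where inj: "inj_on (\<lambda>e. cc B m (f ` e)) {{0,1},{1,2},{0,2::nat}}"
    unfolding rainbow_copy_def K3_def by auto
  have i1: "col B m (f 0) (f 1) \<noteq> col B m (f 1) (f 2)"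
  proof
    assume "col B m (f 0) (f 1) = col B m (f 1) (f 2)"
    then have "cc B m (f ` {0,1}) = cc B m (f ` {1,2})" by (simp only: image_insert image_empty cc_pair)
    then have "{0,1} = {1,2::nat}" by (rule inj_onD[OF inj]) auto
    then show False by (auto simp: doubleton_eq_iff)
  qed
  have i2: "col B m (f 1) (f 2) \<noteq> col B m (f 0) (f 2)"
  proof
    assume "col B m (f 1) (f 2) = col B m (f 0) (f 2)"
    then have "cc B m (f ` {1,2}) = cc B m (f ` {0,2})" by (simp only: image_insert image_empty cc_pair)
    then have "{1,2} = {0,2::nat}" by (rule inj_onD[OF inj]) auto
    then show False by (auto simp: doubleton_eq_iff)
  qed
  have i3: "col B m (f 0) (f 1) \<noteq> col B m (f 0) (f 2)"
  proof
    assume "col B m (f 0) (f 1) = col B m (f 0) (f 2)"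
    then have "cc B m (f ` {0,1}) = cc B m (f ` {0,2})" by (simp only: image_insert image_empty cc_pair)
    then have "{0,1} = {0,2::nat}" by (rule inj_onD[OF inj]) auto
    then show False by (auto simp: doubleton_eq_iff)
  qed
  show False using col_tri[of B m "f 0" "f 1" "f 2"] i1 i2 i3 by blast
qed

lemma no_mono:
  assumes N: "N \<le> B + m*t" and mn: "m \<le> n" and B: "B = 5*(n div 2) + n mod 2"
  shows "\<not> mono_copy N (cc B m) (double_star n m)"
proof
  assume "mono_copy N (cc B m) (double_star n m)"
  then obtain f c0 where inj: "inj_on f {0..<n+m+2}" and rng: "f ` {0..<n+m+2} \<subseteq> {..<N}"
    and mono: "\<forall>e\<in>{{0,1}} \<union> (\<lambda>i. {0,i}) ` {2..<n+2} \<union> (\<lambda>j. {1,j}) ` {n+2..<n+m+2}. cc B m (f ` e) = c0"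
    unfolding mono_copy_def double_star_def by auto
  define u where "u = f 0"
  define v where "v = f 1"
  have "cc B m (f ` {0,1}) = c0" using mono by blast
  then have uv: "col B m u v = c0" by (simp only: image_insert image_empty cc_pair u_def v_def)
  have fin: "finite (Nb B m (B + m*t) x c0)" for x unfolding Nb_def by auto
  have A: "f ` {1..<n+2} \<subseteq> Nb B m (B + m*t) u c0"
  proof
    fix w assume "w \<in> f ` {1..<n+2}"
    then obtain i where i: "i \<in> {1..<n+2}" "w = f i" by auto
    have "i \<in> {0..<n+m+2}" using i by auto
    then have "f i < N" using rng by (meson image_subset_iff lessThan_iff)
    moreover have "f i \<noteq> f 0" using inj_onD[OF inj, of i 0] i by auto
    moreover have "col B m u (f i) = c0"
    proof (cases "i = 1")
      case True then show ?thesis using uv v_def by simp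
    next
      case False
      then have "{0, i} \<in> (\<lambda>i. {0,i}) ` {2..<n+2}" using i by auto
      then have "cc B m (f ` {0,i}) = c0" using mono by blast
      then show ?thesis by (simp only: image_insert image_empty cc_pair u_def)
    qed
    ultimately show "w \<in> Nb B m (B + m*t) u c0" using i N u_def unfolding Nb_def by auto
  qed
  have C: "f ` ({0} \<union> {n+2..<n+m+2}) \<subseteq> Nb B m (B + m*t) v c0"
  proof
    fix w assume "w \<in> f ` ({0} \<union> {n+2..<n+m+2})"
    then obtain i where i: "i \<in> {0} \<union> {n+2..<n+m+2}" "w = f i" by blast
    have "i \<in> {0..<n+m+2}" using i by auto
    then have "f i < N" using rng by (meson image_subset_iff lessThan_iff)
    moreover have "f i \<noteq> f 1" using inj_onD[OF inj, of i 1] i by auto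
    moreover have "col B m v (f i) = c0"
    proof (cases "i = 0")
      case True then show ?thesis using uv u_def col_sym by metis
    next
      case False
      then have "{1, i} \<in> (\<lambda>j. {1,j}) ` {n+2..<n+m+2}" using i by auto
      then have "cc B m (f ` {1,i}) = c0" using mono by blast
      then show ?thesis by (simp only: image_insert image_empty cc_pair v_def)
    qed
    ultimately show "w \<in> Nb B m (B + m*t) v c0" using i N v_def unfolding Nb_def by auto
  qed
  have "card (f ` {1..<n+2}) = n + 1"
    using card_image[OF inj_on_subset[OF inj, of "{1..<n+2}"]] by auto
  then have cu: "n + 1 \<le> card (Nb B m (B + m*t) u c0)"
    using card_mono[OF fin A] by simp
  have "card (f ` ({0} \<union> {n+2..<n+m+2})) = m + 1"
    using card_image[OF inj_on_subset[OF inj, of "{0} \<union> {n+2..<n+m+2}"]] by auto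
  then have cv: "m + 1 \<le> card (Nb B m (B + m*t) v c0)"
    using card_mono[OF fin C] by simp
  show False
  proof (cases "c0 \<le> 2")
    case True
    then show False using deg_small[OF True mn B, of t u] cu by simp
  next
    case False
    then have "col B m u v \<ge> 3" using uv by simp
    from deg_big[OF this, of t] show False using cu cv uv mn by auto
  qed
qed

lemma coloring:
  assumes N: "N \<le> B + m*(k-3)" and k: "k \<ge> 4"
  shows "k_coloring k N (cc B m)"
  unfolding k_coloring_def
proof
  fix e assume "e \<in> KN_edges N"
  then have e: "e \<subseteq> {..<N}" "card e = 2" by (auto simp: KN_edges_def)
  then obtain a b where ab: "e = {a, b}" "a \<noteq> b" by (auto simp: card_Suc_eq numeral_2_eq_2)
  have a: "a < B + m*(k-3)" and b: "b < B + m*(k-3)" using e ab N by auto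
  have lv: "lev B m w \<le> k - 3" if w: "w < B + m*(k-3)" for w
  proof (cases "w < B")
    case True then show ?thesis by (simp add: lev_def)
  next
    case False
    then have "m > 0" using w by (cases "m = 0") auto
    have "w - B < m * (k-3)" using w False by linarith
    then have "(w - B) div m < k - 3" using \<open>m > 0\<close>
      by (simp add: div_less_iff_less_mult mult.commute)
    then show ?thesis using False by (simp add: lev_def)
  qed
  have "col B m a b < k"
    using lv[OF a] lv[OF b] bcol_le[of a b] k unfolding col_def by auto
  then show "cc B m e < k" using ab by (simp add: cc_pair)
qed

theorem lemma2:
  fixes n m k :: nat
  assumes "n \<ge> m" and "k \<ge> 4"
  shows "gr k K3 (double_star n m) \<ge>
           enat (if even n then 5 * (n div 2) + m * (k - 3) + 1
                 else 5 * ((n - 1) div 2) + m * (k - 3) + 2)"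
proof -
  define B where "B = 5*(n div 2) + n mod 2"
  have val: "(if even n then 5 * (n div 2) + m * (k - 3) + 1
                 else 5 * ((n - 1) div 2) + m * (k - 3) + 2) = B + m*(k-3) + 1"
    unfolding B_def by (cases "even n") (auto elim: oddE)
  show ?thesis
    unfolding gr_def val
  proof (rule Inf_greatest)
    fix y assume "y \<in> enat ` {N. \<forall>c. k_coloring k N c \<longrightarrow> rainbow_copy N c K3 \<or> mono_copy N c (double_star n m)}"
    then obtain N where y: "y = enat N" and hN: "\<forall>c. k_coloring k N c \<longrightarrow> rainbow_copy N c K3 \<or> mono_copy N c (double_star n m)"
      by auto
    have "B + m*(k-3) + 1 \<le> N"
    proof (rule ccontr)
      assume "\<not> ?thesis"
      then have N: "N \<le> B + m*(k-3)" by simp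
      have "k_coloring k N (cc B m)" using coloring[OF N assms(2)] .
      then show False using hN no_rainbow no_mono[OF N assms(1) B_def] by blast
    qed
    then show "enat (B + m*(k-3) + 1) \<le> y" using y by simp
  qed
qed

end
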